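(* Let $X,Y\subseteq\Sigma^*$ be infinite languages and $F\subseteq\Sigma^*$ a finite language. Then $D(X,Y)=D(X\cup F,Y)$ for every $D\in\{\mathrm{AH}_{\mathrm{ned}},\mathrm{AH}_{\mathrm{ged}},\mathrm{AH}_{\mathrm{ced}}\}$.
   Context: $\Sigma$ is a finite alphabet. An edit path from $x$ to $y$ is a sequence $p=(a_1,b_1)\cdots(a_n,b_n)$ with $(a_i,b_i)\in(\Sigma\cup\{\varepsilon\})^2\setminus\{(\varepsilon,\varepsilon)\}$, $a_1\cdots a_n=x$, $b_1\cdots b_n=y$; $|p|=n$, $\mathrm{wgt}(p)=|\{i:a_i\ne b_i\}|$. $\mathrm{ed}(x,y)=\min_p\mathrm{wgt}(p)$; $\mathrm{ned}(x,y)=\min_p\mathrm{wgt}(p)/|p|$ ($\mathrm{ned}(\varepsilon,\varepsilon)=0$); $\mathrm{ged}(x,y)=\frac{2\mathrm{ed}(x,y)}{|x|+|y|+\mathrm{ed}(x,y)}$ ($0$ if $x=y=\varepsilon$); $\mathrm{ced}(x,y)$ is the minimum, over sequences $x=u_0,\dots,u_k=y$ with $\mathrm{ed}(u_{i-1},u_i)=1$, of $\sum_{i=1}^k1/\max(|u_{i-1}|,|u_i|)$. For a word distance $d$ and languages $X,Y$: $\overrightarrow{\mathrm{AH}}_{d}(X,Y)=\lim_{k\to\infty}\sup_{x\in X,|x|\ge k}\inf_{y\in Y}d(x,y)$ and $\mathrm{AH}_d(X,Y)=\max\{\overrightarrow{\mathrm{AH}}_{d}(X,Y),\overrightarrow{\mathrm{AH}}_{d}(Y,X)\}$.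 *)

theory Defs
  imports "HOL-Analysis.Analysis" "HOL-Library.Extended_Real"
begin

text \<open>Words over the finite alphabet 'a are lists; \<open>None\<close> plays the role of the empty word.\<close>

definition opt_word :: "'a option \<Rightarrow> 'a list" where
  "opt_word a = (case a of None \<Rightarrow> [] | Some c \<Rightarrow> [c])"

definition edit_path :: "('a option \<times> 'a option) list \<Rightarrow> 'a list \<Rightarrow> 'a list \<Rightarrow> bool" where
  "edit_path p x y \<longleftrightarrow>
     (\<forall>e\<in>set p. e \<noteq> (None, None)) \<and>
     concat (map (\<lambda>e. opt_word (fst e)) p) = x \<and>
     concat (map (\<lambda>e. opt_word (snd e)) p) = y"

definition wgt :: "('a option \<times> 'a option) list \<Rightarrow> nat" where
  "wgt p = length (filter (\<lambda>e. fst e \<noteq> snd e) p)"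

definition ed :: "'a list \<Rightarrow> 'a list \<Rightarrow> nat" where
  "ed x y = (INF p \<in> {p. edit_path p x y}. wgt p)"

definition ned :: "'a list \<Rightarrow> 'a list \<Rightarrow> real" where
  "ned x y = (if x = [] \<and> y = [] then 0
     else (INF p \<in> {p. edit_path p x y}. real (wgt p) / real (length p)))"

definition ged :: "'a list \<Rightarrow> 'a list \<Rightarrow> real" where
  "ged x y = (if x = [] \<and> y = [] then 0
     else 2 * real (ed x y) / (real (length x) + real (length y) + real (ed x y)))"

definition ced_chain :: "'a list \<Rightarrow> 'a list \<Rightarrow> 'a list list \<Rightarrow> bool" where
  "ced_chain x y us \<longleftrightarrow> us \<noteq> [] \<and> hd us = x \<and> last us = y \<and>
     (\<forall>i < length us - 1. ed (us ! i) (us ! Suc i) = 1)"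

definition ced :: "'a list \<Rightarrow> 'a list \<Rightarrow> real" where
  "ced x y = (INF us \<in> {us. ced_chain x y us}.
     (\<Sum>i < length us - 1. 1 / real (max (length (us ! i)) (length (us ! Suc i)))))"

definition AH_dir :: "('a list \<Rightarrow> 'a list \<Rightarrow> real) \<Rightarrow> 'a list set \<Rightarrow> 'a list set \<Rightarrow> ereal" where
  "AH_dir d X Y = lim (\<lambda>k::nat. SUP x \<in> {x \<in> X. length x \<ge> k}. INF y \<in> Y. ereal (d x y))"

definition AH :: "('a list \<Rightarrow> 'a list \<Rightarrow> real) \<Rightarrow> 'a list set \<Rightarrow> 'a list set \<Rightarrow> ereal" where
  "AH d X Y = max (AH_dir d X Y) (AH_dir d Y X)"

end

theory Submission imports Defs begin

lemma len_opt_word: "length (opt_word a) \<le> 1"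
  by (cases a) (auto simp: opt_word_def)

lemma len_concat_fst: "length (concat (map (\<lambda>e. opt_word (fst e)) p)) \<le> length p"
proof (induction p)
  case (Cons e p) then show ?case using len_opt_word[of "fst e"] by simp
qed simp

lemma len_concat_snd: "length (concat (map (\<lambda>e. opt_word (snd e)) p)) \<le> length p"
proof (induction p)
  case (Cons e p) then show ?case using len_opt_word[of "snd e"] by simp
qed simp

lemma eq_le_snd: "(\<forall>e\<in>set p. e \<noteq> (None, None)) \<Longrightarrow>
  length (filter (\<lambda>e. fst e = snd e) p) \<le> length (concat (map (\<lambda>e. opt_word (snd e)) p))"
proof (induction p)
  case (Cons e p)
  obtain a b where e: "e = (a,b)" by fastforce
  show ?case
  proof (cases "a = b")
    case True
    then obtain c where "b = Some c" using Cons.prems e by (cases b) auto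
    then show ?thesis using Cons e True by (simp add: opt_word_def)
  next
    case False then show ?thesis using Cons e by simp
  qed
qed simp

lemma eq_le_fst: "(\<forall>e\<in>set p. e \<noteq> (None, None)) \<Longrightarrow>
  length (filter (\<lambda>e. fst e = snd e) p) \<le> length (concat (map (\<lambda>e. opt_word (fst e)) p))"
proof (induction p)
  case (Cons e p)
  obtain a b where e: "e = (a,b)" by fastforce
  show ?case
  proof (cases "a = b")
    case True
    then obtain c where "b = Some c" using Cons.prems e by (cases b) auto
    then show ?thesis using Cons e True by (simp add: opt_word_def)
  next
    case False then show ?thesis using Cons e by simp
  qed
qed simp

lemma wgt_eq: "wgt p + length (filter (\<lambda>e. fst e = snd e) p) = length p"
  unfolding wgt_def using sum_length_filter_compl[of "\<lambda>e. fst e = snd e" p] by simp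

lemma path_facts:
  assumes "edit_path p x y"
  shows "length x \<le> length p" "length y \<le> length p"
    "length (filter (\<lambda>e. fst e = snd e) p) \<le> length y"
    "length (filter (\<lambda>e. fst e = snd e) p) \<le> length x"
    "wgt p + length (filter (\<lambda>e. fst e = snd e) p) = length p"
  using assms len_concat_fst[of p] len_concat_snd[of p] eq_le_fst[of p] eq_le_snd[of p] wgt_eq[of p]
  unfolding edit_path_def by auto

lemma wgt_ge: "edit_path p x y \<Longrightarrow> length x - length y \<le> wgt p \<and> length y - length x \<le> wgt p"
  using path_facts[of p x y] by linarith

definition dipath :: "'a list \<Rightarrow> 'a list \<Rightarrow> ('a option \<times> 'a option) list" where
  "dipath x y = map (\<lambda>c. (Some c, None)) x @ map (\<lambda>c. (None, Some c)) y"

lemma concat_some: "concat (map (\<lambda>c. opt_word (Some c)) x) = x"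
  by (induction x) (auto simp: opt_word_def)

lemma dipath: "edit_path (dipath x y) x y" "wgt (dipath x y) = length x + length y"
  "length (dipath x y) = length x + length y"
  by (auto simp: dipath_def edit_path_def wgt_def opt_word_def o_def concat_some)

lemma ed_le: "edit_path p x y \<Longrightarrow> ed x y \<le> wgt p"
  unfolding ed_def by (rule cINF_lower) auto

lemma ed_ge: "length x - length y \<le> ed x y \<and> length y - length x \<le> ed x y"
  unfolding ed_def using dipath(1)[of x y] wgt_ge[of _ x y]
  by (auto intro!: cINF_greatest)

lemma ed_le_sum: "ed x y \<le> length x + length y"
  using ed_le[OF dipath(1)] dipath(2) by metis

lemma ed_del: "ed (c # w) w = 1"
proof -
  let ?p = "(Some c, None) # map (\<lambda>a. (Some a, Some a)) w"
  have "edit_path ?p (c # w) w"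
    by (auto simp: edit_path_def opt_word_def o_def concat_some)
  moreover have "wgt ?p = 1" by (simp add: wgt_def o_def)
  ultimately have "ed (c # w) w \<le> 1" using ed_le by metis
  moreover have "1 \<le> ed (c # w) w" using ed_ge[of "c # w" w] by simp
  ultimately show ?thesis by simp
qed

lemma ed_ins: "ed w (c # w) = 1"
proof -
  let ?p = "(None, Some c) # map (\<lambda>a. (Some a, Some a)) w"
  have "edit_path ?p w (c # w)"
    by (auto simp: edit_path_def opt_word_def o_def concat_some)
  moreover have "wgt ?p = 1" by (simp add: wgt_def o_def)
  ultimately have "ed w (c # w) \<le> 1" using ed_le by metis
  moreover have "1 \<le> ed w (c # w)" using ed_ge[of w "c # w"] by simp
  ultimately show ?thesis by simp
qed


lemma ned_le1: "ned y x \<le> 1"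
proof (cases "y = [] \<and> x = []")
  case True then show ?thesis by (simp add: ned_def)
next
  case False
  have "ned y x \<le> real (wgt (dipath y x)) / real (length (dipath y x))"
    unfolding ned_def using False dipath(1)[of y x]
    by (auto intro!: cINF_lower bdd_belowI[where m=0])
  also have "\<dots> = 1" using False by (simp add: dipath del: of_nat_add flip: of_nat_add)
  finally show ?thesis .
qed

lemma ned_lower: assumes "y \<noteq> []" shows "1 - real (length f) / real (length y) \<le> ned y f"
proof -
  have "1 - real (length f) / real (length y) \<le> real (wgt p) / real (length p)"
    if p: "edit_path p y f" for p
  proof -
    note pf = path_facts[OF p]
    let ?e = "length (filter (\<lambda>e. fst e = snd e) p)"
    have ly: "0 < length y" using assms by simp
    have lp: "length y \<le> length p" using pf by simp
    have w: "real (wgt p) = real (length p) - real ?e" using pf(5) by linarith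
    have "real (wgt p) / real (length p) = 1 - real ?e / real (length p)"
      unfolding w using ly lp by (auto simp add: diff_divide_distrib)
    moreover have "real ?e / real (length p) \<le> real (length f) / real (length y)"
      using pf ly lp by (intro frac_le) auto
    ultimately show ?thesis by simp
  qed
  then show ?thesis unfolding ned_def using assms dipath(1)[of y f]
    by (auto intro!: cINF_greatest)
qed

lemma ged_le1: "ged y x \<le> 1"
proof (cases "y = [] \<and> x = []")
  case True then show ?thesis by (simp add: ged_def)
next
  case False
  have e: "real (ed y x) \<le> real (length y) + real (length x)" using ed_le_sum[of y x] by linarith
  have "0 < length y + length x" using False by auto
  then have pos: "0 < real (length y) + real (length x) + real (ed y x)" by linarith
  show ?thesis using False e pos by (simp add: ged_def)
qed

lemma ged_lower: assumes "y \<noteq> []" shows "1 - real (length f) / real (length y) \<le> ged y f"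
proof -
  define e where "e = real (ed y f)"
  define a where "a = real (length y)"
  define b where "b = real (length f)"
  have a: "a > 0" using assms a_def by simp
  have b: "b \<ge> 0" "e \<ge> 0" using b_def e_def by auto
  have g: "ged y f = 2 * e / (a + b + e)" using assms by (simp add: ged_def a_def b_def e_def add.commute)
  show ?thesis
  proof (cases "a \<le> b")
    case True
    have "1 - b / a \<le> 0" using True a by (simp add: field_simps)
    moreover have "0 \<le> ged y f" using g a b by simp
    ultimately show ?thesis by (simp add: a_def b_def)
  next
    case False
    have "length y - length f \<le> ed y f" using ed_ge by blast
    then have ee: "a - b \<le> e" using False unfolding a_def b_def e_def by linarith
    have "0 \<le> (a + b) * (e - a + b)" using ee a b by simp
    then have "(a - b) * (a + b + e) \<le> 2 * e * a" by (simp add: algebra_simps)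
    then have "1 - b / a \<le> 2 * e / (a + b + e)" using a b by (simp add: field_simps)
    then show ?thesis using g a_def b_def by simp
  qed
qed

lemma ed1_len: "ed u v = 1 \<Longrightarrow> length u \<le> length v + 1 \<and> length v \<le> length u + 1"
  using ed_ge[of u v] by linarith

lemma harm_step: assumes "ed u v = 1"
  shows "harm (length u) - harm (length v) \<le> 1 / real (max (length u) (length v))"
proof -
  have l: "length u \<le> length v + 1" "length v \<le> length u + 1" using ed1_len[OF assms] by auto
  consider "length u = Suc (length v)" | "length u = length v" | "length v = Suc (length u)"
    using l by linarith
  then show ?thesis
  proof cases
    case 1 then show ?thesis by (simp add: harm_Suc field_simps)
  next
    case 2 then show ?thesis by simp
  next
    case 3 then show ?thesis by (simp add: harm_Suc field_simps)
  qed
qed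

lemma chain_lower:
  "us \<noteq> [] \<Longrightarrow> (\<forall>i < length us - 1. ed (us ! i) (us ! Suc i) = 1) \<Longrightarrow>
   harm (length (hd us)) - harm (length (last us))
     \<le> (\<Sum>i < length us - 1. 1 / real (max (length (us ! i)) (length (us ! Suc i))))"
proof (induction us)
  case Nil then show ?case by simp
next
  case (Cons u rest)
  show ?case
  proof (cases rest)
    case Nil then show ?thesis by simp
  next
    case (Cons v rest')
    have h: "\<forall>i < length rest - 1. ed (rest ! i) (rest ! Suc i) = 1"
    proof (intro allI impI)
      fix i assume "i < length rest - 1"
      then show "ed (rest ! i) (rest ! Suc i) = 1" using Cons.prems(2)[rule_format, of "Suc i"] by simp
    qed
    have IH: "harm (length (hd rest)) - harm (length (last rest))
     \<le> (\<Sum>i < length rest - 1. 1 / real (max (length (rest ! i)) (length (rest ! Suc i))))"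
      using Cons.IH h Cons by simp
    have e1: "ed u v = 1" using Cons.prems(2)[rule_format, of 0] Cons by simp
    have "length (u # rest) - 1 = Suc (length rest - 1)" using Cons by simp
    then have s: "(\<Sum>i < length (u # rest) - 1. 1 / real (max (length ((u # rest) ! i)) (length ((u # rest) ! Suc i))))
       = 1 / real (max (length u) (length v)) +
         (\<Sum>i < length rest - 1. 1 / real (max (length (rest ! i)) (length (rest ! Suc i))))"
      by (simp only: sum.lessThan_Suc_shift) (simp add: Cons)
    show ?thesis using s IH harm_step[OF e1] Cons by simp
  qed
qed

lemma chain_snoc: "ced_chain x y us \<Longrightarrow> ed y z = 1 \<Longrightarrow> ced_chain x z (us @ [z])"
  unfolding ced_chain_def
  apply (auto simp: nth_append)
  by (metis Suc_lessI diff_Suc_1 last_conv_nth length_greater_0_conv less_Suc_eq_0_disj)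

lemma chain_exists: "\<exists>us. ced_chain x y us"
proof -
  have d: "\<exists>us. ced_chain x (drop k x) us" for k
  proof (induction k)
    case 0 then show ?case by (rule exI[of _ "[x]"]) (simp add: ced_chain_def)
  next
    case (Suc k)
    then obtain us where us: "ced_chain x (drop k x) us" by blast
    show ?case
    proof (cases "k < length x")
      case True
      then have "drop k x = x ! k # drop (Suc k) x" by (simp add: Cons_nth_drop_Suc)
      then have "ed (drop k x) (drop (Suc k) x) = 1" by (simp add: ed_del)
      then show ?thesis using chain_snoc[OF us] by blast
    next
      case False then show ?thesis using us by auto
    qed
  qed
  obtain us0 where us0: "ced_chain x [] us0" using d[of "length x"] by auto
  have "\<exists>us. ced_chain x (drop (length y - j) y) us" for j
  proof (induction j)
    case 0 then show ?case using us0 by auto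
  next
    case (Suc j)
    then obtain us where us: "ced_chain x (drop (length y - j) y) us" by blast
    show ?case
    proof (cases "j < length y")
      case True
      have "drop (length y - Suc j) y = y ! (length y - Suc j) # drop (length y - j) y"
        using True Cons_nth_drop_Suc[of "length y - Suc j" y] by (simp add: Suc_diff_Suc)
      then have "ed (drop (length y - j) y) (drop (length y - Suc j) y) = 1" by (simp add: ed_ins)
      then show ?thesis using chain_snoc[OF us] by metis
    next
      case False then show ?thesis using us by auto
    qed
  qed
  from this[of "length y"] show ?thesis by simp
qed

lemma ced_lower: "harm (length y) - harm (length f) \<le> ced y f"
  unfolding ced_def
proof (rule cINF_greatest)
  show "{us. ced_chain y f us} \<noteq> {}" using chain_exists[of y f] by auto
  fix us assume "us \<in> {us. ced_chain y f us}"
  then have c: "ced_chain y f us" by simp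
  show "harm (length y) - harm (length f)
     \<le> (\<Sum>i < length us - 1. 1 / real (max (length (us ! i)) (length (us ! Suc i))))"
    using chain_lower[of us] c unfolding ced_chain_def by blast
qed


lemma AH_dir_left:
  assumes "finite F"
  shows "AH_dir d (X \<union> F) Y = AH_dir d X Y"
proof -
  obtain N where N: "\<forall>f\<in>F. length f < N"
    using finite_nat_bounded[OF finite_imageI[OF assms, of length]] by auto
  have ev: "eventually (\<lambda>k. (SUP x \<in> {x \<in> X \<union> F. length x \<ge> k}. INF y \<in> Y. ereal (d x y))
     = (SUP x \<in> {x \<in> X. length x \<ge> k}. INF y \<in> Y. ereal (d x y))) sequentially"
  proof (rule eventually_sequentiallyI[of N])
    fix k assume "N \<le> k"
    then have "{x \<in> X \<union> F. length x \<ge> k} = {x \<in> X. length x \<ge> k}" using N by fastforce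
    then show "(SUP x \<in> {x \<in> X \<union> F. length x \<ge> k}. INF y \<in> Y. ereal (d x y))
     = (SUP x \<in> {x \<in> X. length x \<ge> k}. INF y \<in> Y. ereal (d x y))" by simp
  qed
  show ?thesis unfolding AH_dir_def lim_def using tendsto_cong[OF ev] by simp
qed

lemma AH_dir_right:
  assumes cond: "\<And>r::real. \<exists>K. \<forall>y\<in>Y. length y \<ge> K \<longrightarrow> ereal r < (INF x \<in> X. ereal (d y x))
      \<longrightarrow> (\<exists>B>r. \<forall>f\<in>F. B \<le> d y f)"
  shows "AH_dir d Y (X \<union> F) = AH_dir d Y X"
proof -
  define s where "s k = (SUP y \<in> {y \<in> Y. length y \<ge> k}. INF x \<in> X. ereal (d y x))" for k
  define t where "t k = (SUP y \<in> {y \<in> Y. length y \<ge> k}. INF x \<in> X \<union> F. ereal (d y x))" for k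
  have ds: "decseq s" unfolding s_def decseq_def by (auto intro!: SUP_subset_mono)
  have dt: "decseq t" unfolding t_def decseq_def by (auto intro!: SUP_subset_mono)
  have ls: "AH_dir d Y X = (INF k. s k)" unfolding AH_dir_def s_def[symmetric]
    using LIMSEQ_INF[OF ds] by (rule limI)
  have lt: "AH_dir d Y (X \<union> F) = (INF k. t k)" unfolding AH_dir_def t_def[symmetric]
    using LIMSEQ_INF[OF dt] by (rule limI)
  have ts: "t k \<le> s k" for k unfolding t_def s_def
    by (intro SUP_mono') (auto intro!: INF_superset_mono)
  have st: "(INF k. s k) \<le> t k" for k
  proof (rule dense_le)
    fix z assume z: "z < (INF k. s k)"
    show "z \<le> t k"
    proof (cases z)
      case MInf then show ?thesis by simp
    next
      case PInf then show ?thesis using z by simp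
    next
      case (real r)
      obtain K where K: "\<forall>y\<in>Y. length y \<ge> K \<longrightarrow> ereal r < (INF x \<in> X. ereal (d y x))
        \<longrightarrow> (\<exists>B>r. \<forall>f\<in>F. B \<le> d y f)" using cond by blast
      define k' where "k' = max k K"
      have "z < s k'" using z INF_lower[of k' UNIV s] by auto
      then obtain y where y: "y \<in> Y" "length y \<ge> k'" "ereal r < (INF x \<in> X. ereal (d y x))"
        unfolding s_def real by (auto simp: less_SUP_iff)
      then obtain B where B: "B > r" "\<forall>f\<in>F. B \<le> d y f" using K unfolding k'_def by auto
      have "ereal r < (INF x \<in> F. ereal (d y x))"
      proof -
        have "ereal B \<le> (INF x \<in> F. ereal (d y x))" using B by (auto intro!: INF_greatest)
        moreover have "ereal r < ereal B" using B by simp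
        ultimately show ?thesis by (meson less_le_trans)
      qed
      then have "ereal r < (INF x \<in> X \<union> F. ereal (d y x))" using y by (simp add: INF_union)
      also have "\<dots> \<le> t k'" unfolding t_def using y by (auto intro!: SUP_upper)
      also have "\<dots> \<le> t k" using dt unfolding decseq_def k'_def by auto
      finally show ?thesis using real by simp
    qed
  qed
  have "(INF k. t k) = (INF k. s k)"
  proof (rule antisym)
    show "(INF k. t k) \<le> (INF k. s k)"
      by (rule INF_greatest) (meson INF_lower2 ts UNIV_I)
    show "(INF k. s k) \<le> (INF k. t k)" by (rule INF_greatest) (rule st)
  qed
  then show ?thesis using ls lt by simp
qed

lemma cond_bounded:
  fixes d :: "'a list \<Rightarrow> 'a list \<Rightarrow> real"
  assumes le1: "\<And>y x. d y x \<le> 1"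
    and low: "\<And>y f. y \<noteq> [] \<Longrightarrow> 1 - real (length f) / real (length y) \<le> d y f"
    and X: "X \<noteq> {}" and N: "\<forall>f\<in>F. length f \<le> N"
  shows "\<exists>K. \<forall>y\<in>Y. length y \<ge> K \<longrightarrow> ereal r < (INF x \<in> X. ereal (d y x))
      \<longrightarrow> (\<exists>B>r. \<forall>f\<in>F. B \<le> d y f)"
proof (cases "r < 1")
  case False
  obtain x0 where "x0 \<in> X" using X by auto
  then have "(INF x \<in> X. ereal (d y x)) \<le> ereal r" for y
    using le1[of y x0] False by (meson INF_lower2 ereal_less_eq(3) le_less_linear less_le_trans order_less_imp_le)
  then show ?thesis by (meson not_le)
next
  case True
  define K :: nat where "K = nat (ceiling (real N / (1 - r))) + 1"
  have Kp: "K > 0" unfolding K_def by simp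
  have "real N / (1 - r) < real K" unfolding K_def by linarith
  then have NK: "real N / real K < 1 - r" using True Kp by (simp add: field_simps)
  show ?thesis
  proof (rule exI[of _ K], intro ballI impI)
    fix y assume y: "y \<in> Y" "K \<le> length y"
    then have yne: "y \<noteq> []" using Kp by auto
    have "real N / real (length y) \<le> real N / real K" using y Kp by (intro divide_left_mono mult_pos_pos) auto
    then have Br: "1 - real N / real (length y) > r" using NK by linarith
    have "\<forall>f\<in>F. 1 - real N / real (length y) \<le> d y f"
    proof
      fix f assume "f \<in> F"
      then have "real (length f) / real (length y) \<le> real N / real (length y)"
        using N by (intro divide_right_mono) auto
      then show "1 - real N / real (length y) \<le> d y f" using low[OF yne, of f] by linarith
    qed
    then show "\<exists>B>r. \<forall>f\<in>F. B \<le> d y f" using Br by blast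
  qed
qed

lemma cond_ced:
  assumes N: "\<forall>f\<in>F. length f \<le> N"
  shows "\<exists>K. \<forall>y\<in>Y. length y \<ge> K \<longrightarrow> ereal r < (INF x \<in> X. ereal (ced y x))
      \<longrightarrow> (\<exists>B>r. \<forall>f\<in>F. B \<le> ced y f)"
proof -
  have "eventually (\<lambda>n. r + harm N < (harm n :: real)) sequentially"
    using harm_at_top by (simp add: filterlim_at_top_dense)
  then obtain K where K: "\<And>n. n \<ge> K \<Longrightarrow> r + harm N < (harm n :: real)"
    unfolding eventually_sequentially by blast
  show ?thesis
  proof (rule exI[of _ K], intro ballI impI)
    fix y assume y: "y \<in> Y" "K \<le> length y"
    have "\<forall>f\<in>F. harm (length y) - harm N \<le> ced y f"
    proof
      fix f assume "f \<in> F"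
      then have "harm (length f) \<le> (harm N :: real)" using N by (intro harm_mono) auto
      then show "harm (length y) - harm N \<le> ced y f" using ced_lower[of y f] by linarith
    qed
    moreover have "harm (length y) - harm N > r" using K[OF y(2)] by linarith
    ultimately show "\<exists>B>r. \<forall>f\<in>F. B \<le> ced y f" by blast
  qed
qed

theorem mainTheorem7:
  fixes X Y F :: "('a::finite) list set"
  assumes "infinite X" and "infinite Y" and "finite F"
  shows "AH ned X Y = AH ned (X \<union> F) Y \<and>
         AH ged X Y = AH ged (X \<union> F) Y \<and>
         AH ced X Y = AH ced (X \<union> F) Y"
proof -
  obtain N where N: "\<forall>f\<in>F. length f \<le> N"
  proof -
    obtain k where "length ` F \<subseteq> {..<k}" using finite_nat_bounded[OF finite_imageI[OF assms(3), of length]] by blast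
    then have "\<forall>f\<in>F. length f \<le> k" by (auto simp: less_imp_le)
    then show ?thesis using that by blast
  qed
  have X: "X \<noteq> {}" using assms(1) by auto
  have gen: "AH d X Y = AH d (X \<union> F) Y" if c: "\<And>r. \<exists>K. \<forall>y\<in>Y. length y \<ge> K \<longrightarrow> ereal r < (INF x \<in> X. ereal (d y x))
      \<longrightarrow> (\<exists>B>r. \<forall>f\<in>F. B \<le> d y f)" for d
    unfolding AH_def using AH_dir_left[OF assms(3), of d X Y] AH_dir_right[where d=d and X=X and Y=Y and F=F, OF c] by simp
  show ?thesis
    by (intro conjI gen cond_bounded[OF _ _ X N] cond_ced[OF N] ned_le1 ned_lower ged_le1 ged_lower)
qed

end
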